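(* Let $L=\{a^nb^m : n,m\in\mathbb{N},\ m\le n\}\cup\{a^nb^mc : n,m\in\mathbb{N}\}$ over the alphabet $\{a,b,c\}$. Then $L\in \mathrm{CH}_1$ and $L\notin \mathrm{CD}$, i.e. $L$ is recognised by some history-deterministic $1$-VASS under coverability acceptance but by no deterministic $k$-VASS (for any $k$) under coverability acceptance.
   Context: Fix a finite alphabet $\Sigma$. A $k$-dimensional vector addition system with states ($k$-VASS) is a tuple $(Q,q_0,F,\delta)$ where $Q$ is a finite set of states, $q_0\in Q$ is initial, $F\subseteq Q$ is the set of accepting states, and $\delta\subseteq Q\times\Sigma\times\mathbb{Z}^k\times Q$ is a finite set of transitions (no $\varepsilon$-transitions). A run on a word $w=a_1\cdots a_n$ is a sequence of transitions $(p_{i-1},a_i,d_i,p_i)$ with $p_0=q_0$ such that the counter vectors $v_0=\vec 0$, $v_i=v_{i-1}+d_i$ all lie in $\mathbb{N}^k$. Under coverability acceptance the run is accepting if $p_n\in F$. The language is the set of words having an accepting run. A VASS is deterministic if for every state $q$ and letter $a$ there is at most one transition $(q,a,d,q')$. A VASS is history-deterministic if there is a resolver, i.e. a function $r$ mapping each finite sequence of transitions and each letter $a$ to a transition labelled $a$, such that for every word $w$ in the language, the sequence of transitions obtained by successively applying $r$ to the letters of $w$ is a run on $w$ (counters stay nonnegative) and is accepting. $\mathrm{CD}_k$ (resp. $\mathrm{CH}_k$) is the class of languages recognised by deterministic (resp. history-deterministic) $k$-VASS under coverability acceptance, and $\mathrm{CD}=\bigcup_{k\ge1}\mathrm{CD}_k$.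 *)

theory Defs
  imports Main
begin

datatype sym = a | b | c

type_synonym ('q, 's) trans = "'q \<times> 's \<times> int list \<times> 'q"

record ('q, 's) vass =
  states :: "'q set"
  init   :: 'q
  final  :: "'q set"
  delta  :: "('q, 's) trans set"

definition is_vass :: "nat \<Rightarrow> ('q, 's) vass \<Rightarrow> bool" where
  "is_vass k V \<longleftrightarrow> finite (states V) \<and> init V \<in> states V \<and> final V \<subseteq> states V
     \<and> finite (delta V)
     \<and> (\<forall>(p, x, d, p') \<in> delta V. p \<in> states V \<and> p' \<in> states V \<and> length d = k)"

definition counter :: "nat \<Rightarrow> ('q, 's) trans list \<Rightarrow> int list" where
  "counter k ts = foldl (\<lambda>v (p, x, d, p'). map2 (+) v d) (replicate k 0) ts"

definition is_run :: "nat \<Rightarrow> ('q, 's) vass \<Rightarrow> 's list \<Rightarrow> ('q, 's) trans list \<Rightarrow> bool" where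
  "is_run k V w ts \<longleftrightarrow> length ts = length w
     \<and> (\<forall>i < length ts. ts ! i \<in> delta V \<and> fst (snd (ts ! i)) = w ! i)
     \<and> (\<forall>i < length ts. fst (ts ! i) = (if i = 0 then init V else snd (snd (snd (ts ! (i - 1))))))
     \<and> (\<forall>i \<le> length ts. \<forall>x \<in> set (counter k (take i ts)). x \<ge> 0)"

definition last_state :: "('q, 's) vass \<Rightarrow> ('q, 's) trans list \<Rightarrow> 'q" where
  "last_state V ts = (if ts = [] then init V else snd (snd (snd (last ts))))"

definition accepting_run :: "nat \<Rightarrow> ('q, 's) vass \<Rightarrow> 's list \<Rightarrow> ('q, 's) trans list \<Rightarrow> bool" where
  "accepting_run k V w ts \<longleftrightarrow> is_run k V w ts \<and> last_state V ts \<in> final V"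

text \<open>Language under coverability acceptance.\<close>
definition lang :: "nat \<Rightarrow> ('q, 's) vass \<Rightarrow> 's list set" where
  "lang k V = {w. \<exists>ts. accepting_run k V w ts}"

definition deterministic :: "('q, 's) vass \<Rightarrow> bool" where
  "deterministic V \<longleftrightarrow> (\<forall>q x d1 q1 d2 q2. (q, x, d1, q1) \<in> delta V \<and> (q, x, d2, q2) \<in> delta V
      \<longrightarrow> d1 = d2 \<and> q1 = q2)"

fun resolve :: "(('q, 's) trans list \<Rightarrow> 's \<Rightarrow> ('q, 's) trans) \<Rightarrow> ('q, 's) trans list \<Rightarrow> 's list
                 \<Rightarrow> ('q, 's) trans list" where
  "resolve r acc [] = acc"
| "resolve r acc (x # xs) = resolve r (acc @ [r acc x]) xs"

definition is_resolver :: "nat \<Rightarrow> ('q, 's) vass \<Rightarrow> (('q, 's) trans list \<Rightarrow> 's \<Rightarrow> ('q, 's) trans) \<Rightarrow> bool" where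
  "is_resolver k V r \<longleftrightarrow>
     (\<forall>w \<in> lang k V. accepting_run k V w (resolve r [] w))"

definition history_deterministic :: "nat \<Rightarrow> ('q, 's) vass \<Rightarrow> bool" where
  "history_deterministic k V \<longleftrightarrow> (\<exists>r. is_resolver k V r)"

text \<open>Classes CD_k and CH_k. State sets are taken inside \<open>nat\<close> (w.l.o.g., any finite state set
  can be renamed injectively into \<open>nat\<close>).\<close>
definition CD :: "nat \<Rightarrow> sym list set set" where
  "CD k = {L. \<exists>V :: (nat, sym) vass. is_vass k V \<and> deterministic V \<and> lang k V = L}"

definition CH :: "nat \<Rightarrow> sym list set set" where
  "CH k = {L. \<exists>V :: (nat, sym) vass. is_vass k V \<and> history_deterministic k V \<and> lang k V = L}"

definition CD_all :: "sym list set set" where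
  "CD_all = (\<Union>k \<in> {k. k \<ge> 1}. CD k)"

definition L_ex :: "sym list set" where
  "L_ex = {replicate n a @ replicate m b | n m. m \<le> n}
        \<union> {replicate n a @ replicate m b @ [c] | n m. True}"

end

theory Submission
  imports Defs
begin

lemma counter_snoc: "counter k (ts@[(p,x,d,q)]) = map2 (+) (counter k ts) d"
  by (simp add: counter_def)

lemma is_run_Nil[simp]: "is_run k V [] []"
  by (simp add: is_run_def counter_def)

lemma is_run_Nil_iff: "is_run k V [] ts \<longleftrightarrow> ts = []"
  by (auto simp add: is_run_def counter_def)

lemma is_run_snoc: "is_run k V (w@[x]) (ts@[t]) \<longleftrightarrow> is_run k V w ts \<and> t \<in> delta V \<and> fst (snd t) = x
   \<and> fst t = last_state V ts \<and> (\<forall>y\<in>set (counter k (ts@[t])). 0 \<le> y)"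
proof
  assume H: "is_run k V (w@[x]) (ts@[t])"
  then have len: "length ts = length w" by (simp add: is_run_def)
  have A: "\<forall>i < Suc (length ts). (ts@[t]) ! i \<in> delta V \<and> fst (snd ((ts@[t]) ! i)) = (w@[x]) ! i"
    using H len by (simp add: is_run_def)
  have B: "\<forall>i < Suc (length ts). fst ((ts@[t]) ! i) = (if i = 0 then init V else snd (snd (snd ((ts@[t]) ! (i - 1)))))"
    using H by (simp add: is_run_def)
  have C: "\<forall>i \<le> Suc (length ts). \<forall>y \<in> set (counter k (take i (ts@[t]))). y \<ge> 0"
    using H by (simp add: is_run_def)
  have "is_run k V w ts"
    unfolding is_run_def
  proof (intro conjI allI impI)
    show "length ts = length w" by (rule len)
  next
    fix i assume "i < length ts" then show "ts ! i \<in> delta V" using A[rule_format, of i] by (simp add: nth_append)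
  next
    fix i assume "i < length ts" then show "fst (snd (ts ! i)) = w ! i" using A[rule_format, of i] len by (simp add: nth_append)
  next
    fix i assume "i < length ts" then show "fst (ts ! i) = (if i = 0 then init V else snd (snd (snd (ts ! (i - 1)))))"
      using B[rule_format, of i] by (auto simp add: nth_append)
  next
    fix i assume "i \<le> length ts" then show "\<forall>y \<in> set (counter k (take i ts)). y \<ge> 0"
      using C[rule_format, of i] by simp
  qed
  moreover have "t \<in> delta V \<and> fst (snd t) = x" using A[rule_format, of "length ts"] len by (simp add: nth_append)
  moreover have "fst t = last_state V ts"
    using B[rule_format, of "length ts"] by (cases "ts = []") (auto simp: last_state_def nth_append last_conv_nth)
  moreover have "\<forall>y\<in>set (counter k (ts@[t])). 0 \<le> y" using C[rule_format, of "Suc (length ts)"] by simp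
  ultimately show "is_run k V w ts \<and> t \<in> delta V \<and> fst (snd t) = x
   \<and> fst t = last_state V ts \<and> (\<forall>y\<in>set (counter k (ts@[t])). 0 \<le> y)" by blast
next
  assume H: "is_run k V w ts \<and> t \<in> delta V \<and> fst (snd t) = x
   \<and> fst t = last_state V ts \<and> (\<forall>y\<in>set (counter k (ts@[t])). 0 \<le> y)"
  then have len: "length ts = length w" by (simp add: is_run_def)
  show "is_run k V (w@[x]) (ts@[t])"
    unfolding is_run_def
  proof (intro conjI allI impI)
    show "length (ts@[t]) = length (w@[x])" using len by simp
  next
    fix i assume "i < length (ts@[t])"
    then have "i < length ts \<or> i = length ts" by auto
    then show "(ts@[t]) ! i \<in> delta V" using H by (auto simp: is_run_def nth_append)
  next
    fix i assume "i < length (ts@[t])"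
    then have "i < length ts \<or> i = length ts" by auto
    then show "fst (snd ((ts@[t]) ! i)) = (w@[x]) ! i" using H len by (auto simp: is_run_def nth_append)
  next
    fix i assume "i < length (ts@[t])"
    then have "i < length ts \<or> i = length ts" by auto
    then show "fst ((ts@[t]) ! i) = (if i = 0 then init V else snd (snd (snd ((ts@[t]) ! (i - 1)))))"
    proof
      assume "i < length ts" then show ?thesis using H by (auto simp: is_run_def nth_append)
    next
      assume "i = length ts" then show ?thesis using H
        by (cases "ts = []") (auto simp: last_state_def nth_append last_conv_nth)
    qed
  next
    fix i assume "i \<le> length (ts@[t])"
    then have "i \<le> length ts \<or> i = Suc (length ts)" by auto
    then show "\<forall>y \<in> set (counter k (take i (ts@[t]))). y \<ge> 0" using H by (auto simp: is_run_def)
  qed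
qed

lemma is_run_snocE:
  assumes "is_run k V (w@[x]) ts"
  obtains ts' t where "ts = ts'@[t]" "is_run k V w ts'" "t \<in> delta V" "fst (snd t) = x"
     "fst t = last_state V ts'" "\<forall>y\<in>set (counter k ts). 0 \<le> y"
proof -
  have "length ts = Suc (length w)" using assms by (simp add: is_run_def)
  then obtain ts' t where "ts = ts'@[t]" by (metis length_Suc_conv_rev)
  then show ?thesis using that assms is_run_snoc by metis
qed

lemma last_state_snoc[simp]: "last_state V (ts@[(p,x,d,q)]) = q"
  by (simp add: last_state_def)

definition stepf :: "('q, 's) vass \<Rightarrow> 'q \<Rightarrow> 's \<Rightarrow> 'q" where
  "stepf V q x = (THE q'. \<exists>d. (q, x, d, q') \<in> delta V)"

lemma det_last:
  assumes det: "deterministic V"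
  shows "is_run k V w ts \<Longrightarrow> last_state V ts = foldl (stepf V) (init V) w"
proof (induction w arbitrary: ts rule: rev_induct)
  case Nil
  then show ?case by (simp add: is_run_Nil_iff last_state_def)
next
  case (snoc x w)
  from snoc.prems obtain ts' t where t: "ts = ts'@[t]" "is_run k V w ts'" "t \<in> delta V" "fst (snd t) = x"
     "fst t = last_state V ts'" by (rule is_run_snocE)
  obtain p y d q where tt: "t = (p, y, d, q)" by (cases t) auto
  have ih: "last_state V ts' = foldl (stepf V) (init V) w" using snoc.IH t(2) by blast
  have "stepf V p x = q"
    unfolding stepf_def
  proof (rule the_equality)
    show "\<exists>d. (p, x, d, q) \<in> delta V" using t tt by auto
  next
    fix q' assume "\<exists>d'. (p, x, d', q') \<in> delta V"
    then obtain d' where "(p, x, d', q') \<in> delta V" by blast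
    moreover have "(p, x, d, q) \<in> delta V" using t tt by auto
    ultimately show "q' = q" using det unfolding deterministic_def by blast
  qed
  then show ?case using t tt ih by simp
qed

lemma run_prefix: "is_run k V (w@[x]) ts \<Longrightarrow> \<exists>ts'. is_run k V w ts'"
  by (erule is_run_snocE) blast

lemma last_in_states:
  assumes "is_vass k V" "is_run k V w ts"
  shows "last_state V ts \<in> states V"
proof (cases "ts = []")
  case True then show ?thesis using assms by (simp add: last_state_def is_vass_def)
next
  case False
  then have "last ts \<in> delta V" using assms(2) unfolding is_run_def
    by (metis diff_less last_conv_nth length_greater_0_conv zero_less_one)
  then show ?thesis using False assms(1) unfolding is_vass_def last_state_def by auto
qed

lemma filter_a: "filter ((=) a) (replicate n a @ replicate m b) = replicate n a"
  by (induction n) auto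

lemma not_L: assumes "n < n'" shows "replicate n a @ replicate n' b \<notin> L_ex"
proof
  assume "replicate n a @ replicate n' b \<in> L_ex"
  then consider (x) N M where "replicate n a @ replicate n' b = replicate N a @ replicate M b" "M \<le> N"
    | (y) N M where "replicate n a @ replicate n' b = replicate N a @ replicate M b @ [c]"
    unfolding L_ex_def by blast
  then show False
  proof cases
    case x
    then have "filter ((=) a) (replicate n a @ replicate n' b) = filter ((=) a) (replicate N a @ replicate M b)" by simp
    then have nN: "n = N" using filter_a by (metis length_replicate)
    then have "replicate n' b = replicate M b" using x(1) by simp
    then have "n' = M" by (metis length_replicate)
    then show False using nN x(2) assms by simp
  next
    case y
    then have "last (replicate n a @ replicate n' b) = c" by simp
    moreover have "n' > 0" using assms by simp
    ultimately show False by simp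
  qed
qed

lemma notCD:
  fixes V :: "('q, sym) vass"
  assumes v: "is_vass k V" and det: "deterministic V" and L: "lang k V = L_ex"
  shows False
proof -
  define f where "f n = foldl (stepf V) (init V) (replicate n a)" for n
  have fin: "finite (states V)" using v by (simp add: is_vass_def)
  have fS: "f n \<in> states V" for n
  proof -
    have "replicate n a @ replicate 0 b \<in> L_ex" unfolding L_ex_def by blast
    then obtain ts where "is_run k V (replicate n a) ts" using L unfolding lang_def accepting_run_def by auto
    then show ?thesis using last_in_states[OF v] det_last[OF det] f_def by metis
  qed
  have "\<not> inj_on f {..card (states V)}"
  proof
    assume "inj_on f {..card (states V)}"
    then have "card {..card (states V)} \<le> card (states V)"
      using card_inj_on_le[of f "{..card (states V)}" "states V"] fS fin by blast
    then show False by simp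
  qed
  then obtain n1 n2 where "n1 \<noteq> n2" "f n1 = f n2" unfolding inj_on_def by blast
  then obtain n n' where nn: "n < n'" "f n = f n'" by (metis linorder_neqE_nat)
  have "(replicate n a @ replicate n' b) @ [c] \<in> L_ex" unfolding L_ex_def by auto
  then obtain ts where ts: "is_run k V ((replicate n a @ replicate n' b) @ [c]) ts"
    using L unfolding lang_def accepting_run_def by blast
  obtain ts' where ts': "is_run k V (replicate n a @ replicate n' b) ts'" using run_prefix[OF ts] by blast
  have "replicate n' a @ replicate n' b \<in> L_ex" unfolding L_ex_def by blast
  then obtain ts2 where ts2: "is_run k V (replicate n' a @ replicate n' b) ts2" "last_state V ts2 \<in> final V"
    using L unfolding lang_def accepting_run_def by auto
  have "last_state V ts' = foldl (stepf V) (f n) (replicate n' b)"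
    using det_last[OF det ts'] by (simp add: f_def)
  also have "\<dots> = last_state V ts2"
    using det_last[OF det ts2(1)] nn(2) by (simp add: f_def)
  finally have "accepting_run k V (replicate n a @ replicate n' b) ts'"
    using ts' ts2(2) by (simp add: accepting_run_def)
  then have "replicate n a @ replicate n' b \<in> L_ex" using L unfolding lang_def by blast
  then show False using not_L[OF nn(1)] by blast
qed

definition V0 :: "(nat, sym) vass" where
  "V0 = (| states = {0,1,2,3}, init = 0, final = {0,1,3},
     delta = {(0,a,[1],0),(0,b,[-1],1),(0,b,[0],2),(0,c,[0],3),(1,b,[-1],1),(1,b,[0],2),
              (1,c,[0],3),(2,b,[0],2),(2,c,[0],3)} |)"

lemma V0_simps[simp]: "init V0 = 0" "final V0 = {0,1,3}" "states V0 = {0,1,2,3}"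
  "delta V0 = {(0,a,[1],0),(0,b,[-1],1),(0,b,[0],2),(0,c,[0],3),(1,b,[-1],1),(1,b,[0],2),
              (1,c,[0],3),(2,b,[0],2),(2,c,[0],3)}"
  by (simp_all add: V0_def)

lemma V0_vass: "is_vass 1 V0"
  by (simp add: is_vass_def)

definition r0 :: "(nat, sym) trans list \<Rightarrow> sym \<Rightarrow> (nat, sym) trans" where
  "r0 acc x = (let q = last_state V0 acc; v = hd (counter 1 acc) in
     if x = a then (0,a,[1],0)
     else if x = b then (if q = 2 then (2,b,[0],2) else if v > 0 then (q,b,[-1],1) else (q,b,[0],2))
     else (q,c,[0],3))"

lemma r0_b: "r0 acc b = (if last_state V0 acc = 2 then (2,b,[0],2) else if hd (counter 1 acc) > 0
    then (last_state V0 acc,b,[-1],1) else (last_state V0 acc,b,[0],2))"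
  by (simp add: r0_def Let_def)

lemma resolve_snoc: "resolve r acc (xs@[x]) = resolve r acc xs @ [r (resolve r acc xs) x]"
  by (induction xs arbitrary: acc) auto

lemma res_a: "is_run 1 V0 (replicate n a) (resolve r0 [] (replicate n a))
   \<and> last_state V0 (resolve r0 [] (replicate n a)) = 0 \<and> counter 1 (resolve r0 [] (replicate n a)) = [int n]"
proof (induction n)
  case 0
  then show ?case by (simp add: last_state_def counter_def)
next
  case (Suc n)
  have e: "replicate (Suc n) a = replicate n a @ [a]" by (simp add: replicate_append_same)
  let ?ts = "resolve r0 [] (replicate n a)"
  have t: "r0 ?ts a = (0,a,[1],0)" by (simp add: r0_def)
  show ?case unfolding e resolve_snoc t using Suc by (simp add: is_run_snoc counter_snoc)
qed

lemma res_ab: "is_run 1 V0 (replicate n a @ replicate m b) (resolve r0 [] (replicate n a @ replicate m b))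
   \<and> last_state V0 (resolve r0 [] (replicate n a @ replicate m b)) = (if m = 0 then 0 else if m \<le> n then 1 else 2)
   \<and> counter 1 (resolve r0 [] (replicate n a @ replicate m b)) = [int (n - m)]"
proof (induction m)
  case 0
  then show ?case using res_a by simp
next
  case (Suc m)
  have e: "replicate n a @ replicate (Suc m) b = (replicate n a @ replicate m b) @ [b]"
    by (simp add: replicate_append_same)
  let ?ts = "resolve r0 [] (replicate n a @ replicate m b)"
  let ?q = "last_state V0 ?ts"
  show ?case
  proof (cases "m < n")
    case True
    have t: "r0 ?ts b = (?q,b,[-1],1)" using Suc.IH True by (simp add: r0_b)
    have "is_run 1 V0 ((replicate n a @ replicate m b) @ [b]) (?ts @ [(?q,b,[-1],1)])"
      by (subst is_run_snoc) (use Suc.IH True in \<open>auto simp add: counter_snoc\<close>)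
    then show ?thesis unfolding e resolve_snoc t using Suc.IH True by (auto simp add: counter_snoc)
  next
    case False
    have t: "r0 ?ts b = (?q,b,[0],2)" using Suc.IH False by (auto simp add: r0_b)
    have "is_run 1 V0 ((replicate n a @ replicate m b) @ [b]) (?ts @ [(?q,b,[0],2)])"
      by (subst is_run_snoc) (use Suc.IH False in \<open>auto simp add: counter_snoc\<close>)
    then show ?thesis unfolding e resolve_snoc t using Suc.IH False by (auto simp add: counter_snoc)
  qed
qed

lemma res_abc: "is_run 1 V0 (replicate n a @ replicate m b @ [c]) (resolve r0 [] (replicate n a @ replicate m b @ [c]))
   \<and> last_state V0 (resolve r0 [] (replicate n a @ replicate m b @ [c])) = 3"
proof -
  have e: "replicate n a @ replicate m b @ [c] = (replicate n a @ replicate m b) @ [c]" by simp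
  let ?ts = "resolve r0 [] (replicate n a @ replicate m b)"
  let ?q = "last_state V0 ?ts"
  have t: "r0 ?ts c = (?q,c,[0],3)" by (simp add: r0_def)
  have "is_run 1 V0 ((replicate n a @ replicate m b) @ [c]) (?ts @ [(?q,c,[0],3)])"
    by (subst is_run_snoc) (use res_ab[of n m] in \<open>auto simp add: counter_snoc\<close>)
  then show ?thesis unfolding e resolve_snoc t by simp
qed

lemma res_acc: assumes "w \<in> L_ex" shows "accepting_run 1 V0 w (resolve r0 [] w)"
proof -
  from assms consider (x) n m where "w = replicate n a @ replicate m b" "m \<le> n"
    | (y) n m where "w = replicate n a @ replicate m b @ [c]"
    unfolding L_ex_def by blast
  then show ?thesis
  proof cases
    case x
    have "last_state V0 (resolve r0 [] w) \<in> final V0"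
      using res_ab[of n m] x by (cases "m = 0") auto
    then show ?thesis using res_ab[of n m] x unfolding accepting_run_def by simp
  next
    case y
    then show ?thesis using res_abc[of n m] unfolding accepting_run_def by simp
  qed
qed

lemma V0_inv: "is_run 1 V0 w ts \<Longrightarrow>
  (\<exists>n m. w = replicate n a @ replicate m b \<and> last_state V0 ts \<in> {0,1,2}
     \<and> (last_state V0 ts \<in> {0,1} \<longrightarrow> counter 1 ts = [int n - int m])
     \<and> (last_state V0 ts = 0 \<longrightarrow> m = 0))
  \<or> (\<exists>n m. w = replicate n a @ replicate m b @ [c] \<and> last_state V0 ts = 3)"
proof (induction w arbitrary: ts rule: rev_induct)
  case Nil
  then have "ts = []" by (simp add: is_run_Nil_iff)
  then show ?case by (auto simp: last_state_def counter_def intro!: exI[of _ 0])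
next
  case (snoc x w)
  from snoc.prems obtain ts' t where t: "ts = ts'@[t]" "is_run 1 V0 w ts'" "t \<in> delta V0" "fst (snd t) = x"
     "fst t = last_state V0 ts'" by (rule is_run_snocE)
  obtain p y d q where tt: "t = (p, y, d, q)" by (cases t) auto
  have lq: "last_state V0 ts = q" using t tt by simp
  have cnt: "counter 1 ts = map2 (+) (counter 1 ts') d" using t tt by (simp add: counter_snoc)
  from snoc.IH[OF t(2)] show ?case
  proof
    assume "\<exists>n m. w = replicate n a @ replicate m b @ [c] \<and> last_state V0 ts' = 3"
    then show ?case using t tt by auto
  next
    assume "\<exists>n m. w = replicate n a @ replicate m b \<and> last_state V0 ts' \<in> {0,1,2}
     \<and> (last_state V0 ts' \<in> {0,1} \<longrightarrow> counter 1 ts' = [int n - int m])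
     \<and> (last_state V0 ts' = 0 \<longrightarrow> m = 0)"
    then obtain n m where w: "w = replicate n a @ replicate m b" "last_state V0 ts' \<in> {0,1,2}"
      "last_state V0 ts' \<in> {0,1} \<longrightarrow> counter 1 ts' = [int n - int m]"
      "last_state V0 ts' = 0 \<longrightarrow> m = 0" by metis
    have "(t = (0,a,[1],0)) \<or> (t = (p,b,[-1],1) \<and> p \<in> {0,1}) \<or> (t = (p,b,[0],2)) \<or> (t = (p,c,[0],3))"
      using t(3) tt by auto
    then consider "t = (0,a,[1],0)" | "t = (p,b,[-1],1)" "p \<in> {0,1}" | "t = (p,b,[0],2)" | "t = (p,c,[0],3)"
      by blast
    then show ?case
    proof cases
      case 1
      then have "w @ [x] = replicate (Suc n) a @ replicate 0 b" using w t tt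
        by (simp add: replicate_append_same)
      then show ?thesis using 1 w t tt cnt lq by (intro disjI1 exI[of _ "Suc n"] exI[of _ 0]) auto
    next
      case 2
      then have "w @ [x] = replicate n a @ replicate (Suc m) b" using w t tt
        by (simp add: replicate_append_same)
      then show ?thesis using 2 w t tt cnt lq by (intro disjI1 exI[of _ n] exI[of _ "Suc m"]) auto
    next
      case 3
      then have "w @ [x] = replicate n a @ replicate (Suc m) b" using w t tt
        by (simp add: replicate_append_same)
      then show ?thesis using 3 w t tt cnt lq by (intro disjI1 exI[of _ n] exI[of _ "Suc m"]) auto
    next
      case 4
      then have "w @ [x] = replicate n a @ replicate m b @ [c]" using w t tt by simp
      then show ?thesis using 4 w t tt cnt lq by auto
    qed
  qed
qed

lemma run_counter_nonneg: "is_run k V w ts \<Longrightarrow> \<forall>y\<in>set (counter k ts). 0 \<le> y"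
  unfolding is_run_def by (metis order_refl take_all)

lemma lang_V0: "lang 1 V0 = L_ex"
proof
  show "lang 1 V0 \<subseteq> L_ex"
  proof
    fix w assume "w \<in> lang 1 V0"
    then obtain ts where r: "is_run 1 V0 w ts" "last_state V0 ts \<in> {0,1,3}"
      unfolding lang_def accepting_run_def by auto
    have nn: "\<forall>y\<in>set (counter 1 ts). 0 \<le> y" using run_counter_nonneg[OF r(1)] .
    from V0_inv[OF r(1)] show "w \<in> L_ex"
    proof
      assume "\<exists>n m. w = replicate n a @ replicate m b @ [c] \<and> last_state V0 ts = 3"
      then show ?thesis unfolding L_ex_def by blast
    next
      assume "\<exists>n m. w = replicate n a @ replicate m b \<and> last_state V0 ts \<in> {0,1,2}
        \<and> (last_state V0 ts \<in> {0,1} \<longrightarrow> counter 1 ts = [int n - int m])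
        \<and> (last_state V0 ts = 0 \<longrightarrow> m = 0)"
      then obtain n m where w: "w = replicate n a @ replicate m b" "last_state V0 ts \<in> {0,1,2}"
        "last_state V0 ts \<in> {0,1} \<longrightarrow> counter 1 ts = [int n - int m]" by blast
      have "last_state V0 ts \<in> {0,1}" using w(2) r(2) by auto
      then have "m \<le> n" using w(3) nn by auto
      then show ?thesis using w(1) unfolding L_ex_def by blast
    qed
  qed
next
  show "L_ex \<subseteq> lang 1 V0"
  proof
    fix w assume "w \<in> L_ex"
    then have "accepting_run 1 V0 w (resolve r0 [] w)" by (rule res_acc)
    then show "w \<in> lang 1 V0" unfolding lang_def by blast
  qed
qed

theorem mainTheorem2:
  shows "L_ex \<in> CH 1 \<and> L_ex \<notin> CD_all"
proof
  have "is_resolver 1 V0 r0"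
    unfolding is_resolver_def lang_V0
  proof
    fix w assume "w \<in> L_ex"
    then show "accepting_run 1 V0 w (resolve r0 [] w)" by (rule res_acc)
  qed
  then show "L_ex \<in> CH 1"
    unfolding CH_def history_deterministic_def using V0_vass lang_V0 by blast
next
  show "L_ex \<notin> CD_all"
    unfolding CD_all_def CD_def using notCD by blast
qed

end
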